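(* Assume the linear setting below. For every integer $k\ge0$, \[ \min\left\{b_{\varepsilon s^k+s^k-1}:\ \varepsilon\in\{1,\dots,s-1\}\right\}=b_{s^{k+1}-1}, \] i.e. among the integers with base-$s$ digits $\varepsilon\,(s-1)^k$, $\varepsilon\ne0$, the value of $b$ is minimal for $\varepsilon=s-1$. In particular $b_{s-1}\le b_{s-2}\le\cdots\le b_1$.
   Context: Linear setting: integers $q\ge2$, $r\in\{0,1,\dots,q-1\}$, $p>q+r$; $A=\{d\in\{0,1,\dots,p-1\}: d\equiv r\pmod q\}$, $s=\#A\ge2$, and $h(i)=qi+r$ for $0\le i\le s-1$. For a positive integer $n$ with base-$s$ expansion $n=\sum_{i=0}^k\varepsilon_i s^i$ ($\varepsilon_k\ne0$), $a_n=\sum_{i=0}^k h(\varepsilon_i)p^i$ and $b_n=a_n/n^{\log_s p}$. *)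

theory Defs
  imports Complex_Main
begin

definition digitSet :: "nat \<Rightarrow> nat \<Rightarrow> nat \<Rightarrow> nat set" where
  "digitSet q r p = {d \<in> {0..<p}. d mod q = r}"

definition sval :: "nat \<Rightarrow> nat \<Rightarrow> nat \<Rightarrow> nat" where
  "sval q r p = card (digitSet q r p)"

definition hmap :: "nat \<Rightarrow> nat \<Rightarrow> nat \<Rightarrow> nat" where
  "hmap q r i = q * i + r"

definition topIdx :: "nat \<Rightarrow> nat \<Rightarrow> nat" where
  "topIdx s n = (GREATEST k. s ^ k \<le> n)"

definition digit :: "nat \<Rightarrow> nat \<Rightarrow> nat \<Rightarrow> nat" where
  "digit s n i = n div s ^ i mod s"

definition aseq :: "nat \<Rightarrow> nat \<Rightarrow> nat \<Rightarrow> nat \<Rightarrow> nat" where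
  "aseq q r p n = (let s = sval q r p in
      \<Sum>i\<le>topIdx s n. hmap q r (digit s n i) * p ^ i)"

definition bseq :: "nat \<Rightarrow> nat \<Rightarrow> nat \<Rightarrow> nat \<Rightarrow> real" where
  "bseq q r p n = real (aseq q r p n) / (real n) powr (log (real (sval q r p)) (real p))"

end

theory Submission
  imports Defs "HOL-Analysis.Analysis"
begin

lemma cvx:
  fixes a b lam al :: real
  assumes "al \<ge> 1" "0 < a" "0 < b" "0 \<le> lam" "lam \<le> 1"
  shows "((1-lam)*a + lam*b) powr al \<le> (1-lam)*a powr al + lam * b powr al"
  using convex_onD[OF powr_convex[OF assms(1)], of lam a b] assms by simp

lemma C1:
  fixes x s al :: real
  assumes "al \<ge> 1" "1 \<le> x" "x \<le> s" "1 < s"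
  shows "x powr al \<le> 1 + (s powr al - 1) * (x-1)/(s-1)"
proof -
  define lam where "lam = (x-1)/(s-1)"
  have lam: "0 \<le> lam" "lam \<le> 1" using assms by (auto simp: lam_def field_simps)
  have "lam * (s-1) = x - 1" using assms by (simp add: lam_def)
  then have "x = (1-lam) + lam* s" by (simp add: algebra_simps)
  then have "x powr al \<le> (1-lam) * (1 powr al) + lam * s powr al"
    using cvx[OF assms(1), of 1 s lam] lam assms by simp
  also have "\<dots> = 1 + (s powr al - 1) * lam" by (simp add: algebra_simps)
  also have "\<dots> = 1 + (s powr al - 1) * (x-1)/(s-1)" by (simp add: lam_def)
  finally show ?thesis .
qed

lemma C2:
  fixes N V al :: real
  assumes "al \<ge> 1" "1 < N" "N \<le> V"
  shows "(V powr al - 1)/(V-1) powr al \<le> (N powr al - 1)/(N-1) powr al"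
proof -
  define w1 where "w1 = (N-1)/N"
  define w2 where "w2 = (V-1)/V"
  have w: "0 < w1" "w1 \<le> w2" "w2 < 1" using assms
    by (auto simp: w1_def w2_def field_simps)
  define lam where "lam = w1/w2"
  have lam: "0 \<le> lam" "lam \<le> 1" using w by (auto simp: lam_def field_simps)
  have e: "1 - w1 = (1-lam) + lam*(1-w2)" using w by (simp add: lam_def field_simps)
  have "(1-w1) powr al \<le> (1-lam) * (1 powr al) + lam*(1-w2) powr al"
    unfolding e using cvx[OF assms(1), of 1 "1-w2" lam] lam w by simp
  then have h1: "lam*(1 - (1-w2) powr al) \<le> 1 - (1-w1) powr al" by (simp add: algebra_simps)
  have f2: "0 \<le> 1 - (1-w2) powr al" using w assms powr_le1[of al "1-w2"] by simp
  have h2: "(1 - (1-w2) powr al)/w2 \<le> (1 - (1-w1) powr al)/w1"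
    using h1 w by (simp add: lam_def field_simps)
  have h3: "w1 powr (al-1) \<le> w2 powr (al-1)"
    using w assms by (intro powr_mono2) auto
  have g: "\<And>w. 0 < w \<Longrightarrow> (1 - (1-w) powr al)/w powr al = ((1 - (1-w) powr al)/w)/w powr (al-1)"
    by (simp add: powr_diff)
  have "(1 - (1-w2) powr al)/w2 powr al \<le> (1 - (1-w1) powr al)/w1 powr al"
  proof -
    have w2p: "0 < w2" using w by simp
    have q0: "0 \<le> (1 - (1-w2) powr al)/w2" using f2 w2p by simp
    have "((1 - (1-w2) powr al)/w2)/w2 powr (al-1) \<le> ((1 - (1-w2) powr al)/w2)/w1 powr (al-1)"
      by (rule divide_left_mono[OF h3 q0]) (use w in simp)
    also have "\<dots> \<le> ((1 - (1-w1) powr al)/w1)/w1 powr (al-1)"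
      by (rule divide_right_mono[OF h2]) simp
    finally show ?thesis unfolding g[OF w(1)] g[OF w2p] .
  qed
  moreover have "\<And>y. 1 < y \<Longrightarrow> (1 - (1-(y-1)/y) powr al)/((y-1)/y) powr al = (y powr al - 1)/(y-1) powr al"
  proof -
    fix y :: real assume y: "1 < y"
    have "1-(y-1)/y = inverse y" using y by (simp add: field_simps)
    then have A: "(1-(y-1)/y) powr al = inverse (y powr al)" using y by (simp add: inverse_powr)
    have B: "((y-1)/y) powr al = (y-1) powr al / y powr al" using y by (simp add: powr_divide)
    have p1: "y powr al > 0" "(y-1) powr al > 0" using y by auto
    show "(1 - (1-(y-1)/y) powr al)/((y-1)/y) powr al = (y powr al - 1)/(y-1) powr al"
      unfolding A B using p1 by (simp add: field_simps)
  qed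
  ultimately show ?thesis using assms unfolding w1_def w2_def by simp
qed

lemma key:
  fixes q r s t x al :: real
  assumes al: "al \<ge> 1" and s: "1 < s" and t: "1 \<le> t" and x: "1 \<le> x" "x \<le> s" "1 < x*t"
    and qr: "q \<ge> 0" "r \<ge> 0"
  shows "(((q*(s-1)+r)*(t powr al) + (q*(s-1)+r)/(s powr al - 1)*(t powr al - 1)) / (s*t-1) powr al)
     \<le> ((q*(x-1)+r)*(t powr al) + (q*(s-1)+r)/(s powr al-1)*(t powr al-1)) / (x*t-1) powr al"
proof -
  define p where "p = s powr al"
  define P where "P = t powr al"
  define D where "D = q*(s-1)+r"
  define c where "c = D/(p-1)"
  have "s powr 1 \<le> s powr al" using al s by (intro powr_mono) auto
  then have p1: "1 < p" using s by (simp add: p_def)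
  have D0: "0 \<le> D" using qr s by (simp add: D_def)
  have c0: "0 \<le> c" using D0 p1 by (simp add: c_def)
  have cD: "c*(p-1) = D" using p1 by (simp add: c_def)
  have P0: "0 < P" using t by (simp add: P_def)
  define N where "N = x*t"
  define V where "V = s*t"
  have NV: "1 < N" "N \<le> V" using x t by (auto simp: N_def V_def intro: mult_right_mono)
  have hN: "N powr al = x powr al * P" using x t by (simp add: N_def P_def powr_mult)
  have hV: "V powr al = p * P" using s t by (simp add: V_def P_def p_def powr_mult)
  have Av: "D*P + c*(P-1) = c*(V powr al - 1)" unfolding hV cD[symmetric] by (simp add: algebra_simps)
  have "x powr al \<le> 1 + (p - 1) * (x-1)/(s-1)" using C1[OF al x(1) x(2) s] by (simp add: p_def)
  then have "c * x powr al \<le> c * (1 + (p - 1) * (x-1)/(s-1))" using c0 by (rule mult_left_mono)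
  also have "\<dots> = c + (c*(p-1))*(x-1)/(s-1)" by (simp add: distrib_left mult.assoc)
  also have "\<dots> = c + D*(x-1)/(s-1)" unfolding cD ..
  also have "D*(x-1)/(s-1) = q*(x-1) + r*((x-1)/(s-1))" using s by (simp add: D_def field_simps)
  also have "r*((x-1)/(s-1)) \<le> r" using qr x s by (intro mult_left_le) (auto simp: field_simps)
  finally have cx: "c * x powr al \<le> c + (q*(x-1) + r)" by simp
  have An: "c*(N powr al - 1) \<le> (q*(x-1)+r)*P + c*(P-1)"
  proof -
    have "(q*(x-1)+r)*P + c*(P-1) - c*(N powr al - 1) = P*((q*(x-1)+r) + c - c * x powr al)"
      unfolding hN by (simp add: algebra_simps)
    also have "\<dots> \<ge> 0" using cx P0 by simp
    finally show ?thesis by simp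
  qed
  have N1: "0 < (N-1) powr al" using NV by simp
  have "(D*P + c*(P-1)) / (V-1) powr al = c*((V powr al - 1)/(V-1) powr al)" unfolding Av by simp
  also have "\<dots> \<le> c*((N powr al - 1)/(N-1) powr al)" using C2[OF al NV] c0 by (rule mult_left_mono)
  also have "\<dots> = c*(N powr al - 1)/(N-1) powr al" by simp
  also have "\<dots> \<le> ((q*(x-1)+r)*P + c*(P-1))/(N-1) powr al" using divide_right_mono[OF An, of "(N-1) powr al"] N1 by simp
  finally show ?thesis by (simp add: N_def V_def P_def D_def c_def p_def)
qed

lemma sval_le: "sval q r p \<le> p"
proof -
  have "digitSet q r p \<subseteq> {0..<p}" by (auto simp: digitSet_def)
  then have "card (digitSet q r p) \<le> card {0..<p}" by (intro card_mono) auto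
  then show ?thesis unfolding sval_def by simp
qed

lemma digitSet_img:
  assumes "q > 0" "r < q"
  shows "digitSet q r p = (\<lambda>i. q*i+r) ` {i. q*i+r < p}"
proof
  show "digitSet q r p \<subseteq> (\<lambda>i. q*i+r) ` {i. q*i+r < p}"
  proof
    fix d assume d: "d \<in> digitSet q r p"
    have "d mod q = r" "d < p" using d by (auto simp: digitSet_def)
    then have eq: "d = q*(d div q) + r" using div_mult_mod_eq[of d q] by (simp add: mult.commute)
    then have "q*(d div q)+r < p" using \<open>d < p\<close> by simp
    then show "d \<in> (\<lambda>i. q*i+r) ` {i. q*i+r < p}" using eq by (intro image_eqI[where x="d div q"]) auto
  qed
  show "(\<lambda>i. q*i+r) ` {i. q*i+r < p} \<subseteq> digitSet q r p"
  proof
    fix d assume "d \<in> (\<lambda>i. q*i+r) ` {i. q*i+r < p}"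
    then obtain i where i: "d = q*i+r" "q*i+r < p" by blast
    have "(q*i+r) mod q = r" using assms(2) by simp
    then show "d \<in> digitSet q r p" using i by (simp add: digitSet_def)
  qed
qed

lemma top_digit:
  assumes "q > 0" "r < q" "sval q r p \<ge> 1"
  shows "q*(sval q r p - 1) + r < p"
proof -
  define S where "S = {i. q*i+r < p}"
  have "S \<subseteq> {..<p}"
  proof
    fix i assume "i \<in> S"
    then have i1: "q*i+r < p" by (simp add: S_def)
    have "i \<le> q*i" using assms(1) by simp
    then have "i < p" using i1 by linarith
    then show "i \<in> {..<p}" by simp
  qed
  then have fin: "finite S" using finite_subset by blast
  have inj: "inj_on (\<lambda>i. q*i+r) S" using assms by (auto simp: inj_on_def)
  have cs: "card S = sval q r p" unfolding sval_def digitSet_img[OF assms(1,2)] S_def[symmetric]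
    using card_image[OF inj] by simp
  show ?thesis
  proof (rule ccontr)
    assume nt: "\<not> ?thesis"
    have "S \<subseteq> {..<sval q r p - 1}"
    proof
      fix i assume i: "i \<in> S"
      show "i \<in> {..<sval q r p - 1}"
      proof (rule ccontr)
        assume "i \<notin> {..<sval q r p - 1}"
        then have "sval q r p - 1 \<le> i" by simp
        then have le: "q*(sval q r p - 1) \<le> q*i" by (rule mult_le_mono2)
        have i1: "q*i+r < p" using i by (simp add: S_def)
        show False using le i1 nt by linarith
      qed
    qed
    then have "card S \<le> card {..<sval q r p - 1}" by (intro card_mono) auto
    then have "card S \<le> sval q r p - 1" by simp
    then show False using cs assms(3) by simp
  qed
qed

lemma topIdx_eq:
  assumes "s \<ge> 2" "s^k \<le> n" "n < s^(k+1)"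
  shows "topIdx s n = k"
  unfolding topIdx_def
proof (rule Greatest_equality)
  show "s^k \<le> n" by fact
  fix y assume "s^y \<le> n"
  then have "s^y < s^(k+1)" using assms by simp
  then have "y < k+1" using assms(1) power_less_imp_less_exp[of s y "k+1"] by simp
  then show "y \<le> k" by simp
qed

lemma div_pred: "(m::nat) \<ge> 1 \<Longrightarrow> b \<ge> 1 \<Longrightarrow> (m*b - 1) div b = m - 1"
proof -
  assume a: "m \<ge> 1" "b \<ge> 1"
  have x1: "(m-1)*b = m*b - b" by (simp add: diff_mult_distrib)
  have x2: "b \<le> m*b" using a by simp
  have eq: "m*b - 1 = (b-1) + (m-1)*b" unfolding x1 using x2 a by linarith
  have "b \<noteq> 0" using a by simp
  then have "((b-1) + (m-1)*b) div b = (m-1) + (b-1) div b" by (rule div_mult_self1)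
  also have "(b-1) div b = 0" using a by simp
  finally show ?thesis unfolding eq by simp
qed

lemma mod_pred: "(s::nat) \<ge> 1 \<Longrightarrow> s dvd m \<Longrightarrow> m \<ge> 1 \<Longrightarrow> (m - 1) mod s = s - 1"
proof -
  assume a: "s \<ge> 1" "s dvd m" "m \<ge> 1"
  then obtain j where j: "m = s*j" by auto
  then have "j \<ge> 1" using a by (cases j) auto
  then have eq: "m - 1 = (s-1) + (j-1)* s" using a j by (cases j) (auto simp: algebra_simps)
  have "((s-1) + (j-1)* s) mod s = (s-1) mod s" by (rule mod_mult_self1)
  also have "\<dots> = s - 1" using a by simp
  finally show ?thesis unfolding eq .
qed

lemma digit_low:
  assumes "s \<ge> 2" "i < k"
  shows "digit s ((e+1)* s^k - 1) i = s - 1"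
proof -
  have sk: "s^k = s^(k-i) * s^i" using assms by (simp flip: power_add)
  have eqk: "(e+1)* s^k = ((e+1)* s^(k-i)) * s^i" unfolding sk by (simp only: mult.assoc)
  have "(e+1)* s^k - 1 = ((e+1)* s^(k-i)) * s^i - 1" by (simp only: eqk)
  then have "((e+1)* s^k - 1) div s^i = (e+1)* s^(k-i) - 1"
  proof -
    have "1 \<le> s^(k-i)" "1 \<le> s^i" using assms by simp_all
    then have "1 \<le> (e+1)* s^(k-i)" by (metis le_add2 mult_le_mono nat_mult_1)
    then show ?thesis using div_pred[of "(e+1)* s^(k-i)" "s^i"] \<open>1 \<le> s^i\<close>
      by (simp only: \<open>(e+1)* s^k - 1 = ((e+1)* s^(k-i)) * s^i - 1\<close>)
  qed
  moreover have "s dvd (e+1)* s^(k-i)" using assms by simp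
  moreover have "1 \<le> (e+1)* s^(k-i)"
  proof -
    have "1 \<le> s^(k-i)" using assms by simp
    then show ?thesis by (metis le_add2 mult_le_mono nat_mult_1)
  qed
  moreover have "1 \<le> s" using assms by simp
  ultimately show ?thesis unfolding digit_def using mod_pred[of s "(e+1)* s^(k-i)"] by simp
qed

lemma digit_top:
  assumes "s \<ge> 2" "e < s"
  shows "digit s ((e+1)* s^k - 1) k = e"
  unfolding digit_def using div_pred[of "e+1" "s^k"] assms by simp

lemma aseq_form:
  assumes "q > 0" "r < q" "sval q r p \<ge> 2" "1 \<le> e" "e < sval q r p"
  shows "aseq q r p ((e+1)* sval q r p^k - 1)
     = (\<Sum>i<k. hmap q r (sval q r p - 1) * p^i) + hmap q r e * p^k"
proof -
  define s where "s = sval q r p"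
  have s2: "s \<ge> 2" using assms by (simp add: s_def)
  have lo: "s^k \<le> (e+1)* s^k - 1"
  proof -
    have "1 \<le> s^k" using s2 by simp
    moreover have "2* s^k \<le> (e+1)* s^k" using assms by (intro mult_right_mono) auto
    ultimately show ?thesis by linarith
  qed
  have hi: "(e+1)* s^k - 1 < s^(k+1)"
  proof -
    have "(e+1)* s^k \<le> s* s^k" using assms by (intro mult_right_mono) (auto simp: s_def)
    moreover have "1 \<le> s^k" using s2 by simp
    ultimately show ?thesis by simp
  qed
  have t: "topIdx s ((e+1)* s^k - 1) = k" using topIdx_eq[OF s2 lo hi] .
  have "aseq q r p ((e+1)* s^k - 1) = (\<Sum>i\<le>k. hmap q r (digit s ((e+1)* s^k - 1) i) * p^i)"
    unfolding aseq_def Let_def s_def[symmetric] t ..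
  also have "\<dots> = (\<Sum>i<k. hmap q r (digit s ((e+1)* s^k - 1) i) * p^i) + hmap q r (digit s ((e+1)* s^k - 1) k) * p^k"
    by (simp add: lessThan_Suc_atMost[symmetric])
  also have "\<dots> = (\<Sum>i<k. hmap q r (s - 1) * p^i) + hmap q r e * p^k"
    using digit_low[OF s2] digit_top[OF s2] assms by (simp add: s_def)
  finally show ?thesis by (simp add: s_def)
qed


lemma mono2:
  fixes q r e al :: real
  assumes al: "al \<ge> 1" and e: "e \<ge> 1" and qr: "q \<ge> 0" "r \<ge> 0"
  shows "(q*(e+1)+r)/(e+1) powr al \<le> (q*e+r)/e powr al"
proof -
  have A0: "0 \<le> q*(e+1)+r" using qr e by simp
  have h1: "(e+1) powr al = (e+1) * (e+1) powr (al-1)" using e by (simp add: powr_diff)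
  have h2: "e powr al = e * e powr (al-1)" using e by (simp add: powr_diff)
  have m: "e powr (al-1) \<le> (e+1) powr (al-1)" using e al by (intro powr_mono2) auto
  have pos: "0 < e powr (al-1)" using e by simp
  have "(q*(e+1)+r)/(e+1) powr al \<le> (q*(e+1)+r)/((e+1) * e powr (al-1))"
    unfolding h1 using A0 e m pos by (intro divide_left_mono mult_left_mono mult_pos_pos) auto
  also have "\<dots> = ((q*(e+1)+r)/(e+1)) / e powr (al-1)" by simp
  also have "\<dots> \<le> ((q*e+r)/e) / e powr (al-1)"
  proof (rule divide_right_mono)
    have "e*(q*(e+1)+r) \<le> (e+1)*(q*e+r)" using qr e by (simp add: algebra_simps)
    then show "(q*(e+1)+r)/(e+1) \<le> (q*e+r)/e" using e by (simp add: field_simps)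
  qed (use pos in simp)
  also have "\<dots> = (q*e+r)/e powr al" unfolding h2 by simp
  finally show ?thesis .
qed

theorem mainTheorem15:
  fixes q r p k :: nat
  assumes "q \<ge> 2" and "r < q" and "p > q + r" and "sval q r p \<ge> 2"
  shows "Min ((\<lambda>\<epsilon>. bseq q r p (\<epsilon> * sval q r p ^ k + sval q r p ^ k - 1)) ` {1..sval q r p - 1})
           = bseq q r p (sval q r p ^ (k + 1) - 1)
       \<and> (\<forall>\<epsilon>. 1 \<le> \<epsilon> \<and> \<epsilon> + 1 \<le> sval q r p - 1 \<longrightarrow> bseq q r p (\<epsilon> + 1) \<le> bseq q r p \<epsilon>)"
proof -
  define s where "s = sval q r p"
  have s2: "s \<ge> 2" using assms by (simp add: s_def)
  have q0: "q > 0" using assms by simp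
  have sp: "s \<le> p" using sval_le by (simp add: s_def)
  define al where "al = log (real s) (real p)"
  have rs1: "1 < real s" using s2 by simp
  have rp0: "0 < real p" using sp s2 by simp
  have al1: "al \<ge> 1"
  proof -
    have "log (real s) (real s) \<le> log (real s) (real p)" using rs1 rp0 sp by simp
    then show ?thesis using rs1 by (simp add: al_def)
  qed
  have spow: "real s powr al = real p" using rs1 rp0 by (simp add: al_def)
  have tpow: "(real s ^ k) powr al = real p ^ k"
  proof -
    have "(real s ^ k) powr al = (real s powr real k) powr al" using rs1 by (simp add: powr_realpow)
    also have "\<dots> = (real s powr al) powr real k" by (simp add: powr_powr mult.commute)
    also have "\<dots> = real p ^ k" unfolding spow using rp0 by (simp add: powr_realpow)
    finally show ?thesis .
  qed
  define P where "P = real p ^ k"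
  define t where "t = real s ^ k"
  define D where "D = real q * (real s - 1) + real r"
  have p1: "real p \<noteq> 1" using assms by simp
  define F where "F e = ((real q * real e + real r)*P + D/(real p - 1)*(P-1)) / ((real e + 1)*t - 1) powr al" for e :: nat
  have bF: "bseq q r p (e * s^k + s^k - 1) = F e" if e: "1 \<le> e" "e < s" for e
  proof -
    have n: "e * s^k + s^k - 1 = (e+1)* s^k - 1" by (simp add: algebra_simps)
    have a: "aseq q r p ((e+1)* s^k - 1) = (\<Sum>i<k. hmap q r (s - 1) * p^i) + hmap q r e * p^k"
      using aseq_form[OF q0 assms(2) assms(4), of e k] e by (simp add: s_def)
    have "real (\<Sum>i<k. hmap q r (s - 1) * p^i) = D * (\<Sum>i<k. real p^i)"
      using s2 by (simp add: hmap_def D_def sum_distrib_left of_nat_diff)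
    also have "\<dots> = D/(real p - 1)*(P-1)"
      using p1 by (simp add: sum_gp_strict P_def field_simps)
    finally have ar: "real (aseq q r p ((e+1)* s^k - 1)) = (real q * real e + real r)*P + D/(real p - 1)*(P-1)"
      unfolding a by (simp add: hmap_def P_def)
    have one: "1 \<le> (e+1)* s^k" using s2 by (simp add: Suc_leI)
    have rn: "real ((e+1)* s^k - 1) = (real e + 1)*t - 1" using one by (simp add: of_nat_diff t_def algebra_simps)
    show ?thesis unfolding bseq_def n ar rn s_def[symmetric] al_def[symmetric] F_def ..
  qed
  have part1: "Min ((\<lambda>\<epsilon>. bseq q r p (\<epsilon> * s ^ k + s ^ k - 1)) ` {1..s - 1}) = bseq q r p (s ^ (k + 1) - 1)"
  proof -
    have vv: "s ^ (k + 1) - 1 = (s-1) * s^k + s^k - 1"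
    proof -
      have "(s-1)* s^k + s^k = s* s^k" using s2 by (simp add: diff_mult_distrib)
      then show ?thesis by simp
    qed
    have bv: "bseq q r p (s ^ (k + 1) - 1) = F (s-1)" unfolding vv using s2 by (intro bF) auto
    have le: "F (s-1) \<le> F e" if e: "1 \<le> e" "e \<le> s - 1" for e
    proof -
      have t1: "1 \<le> t" using s2 by (simp add: t_def)
      have x: "1 \<le> real e + 1" "real e + 1 \<le> real s" "1 < (real e + 1)*t" using e s2 t1
        by (auto simp: less_le_trans[of 1 "real e + 1"] intro!: less_le_trans[OF _ mult_left_mono[OF t1]])
      have K: "((real q*(real s-1)+real r)*(t powr al) + (real q*(real s-1)+real r)/(real s powr al - 1)*(t powr al - 1)) / (real s*t-1) powr al
     \<le> ((real q*((real e + 1)-1)+real r)*(t powr al) + (real q*(real s-1)+real r)/(real s powr al-1)*(t powr al-1)) / ((real e + 1)*t-1) powr al"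
        using key[OF al1 rs1 t1 x] by simp
      have tp: "t powr al = P" unfolding t_def P_def tpow ..
      have rs: "real (s - 1) = real s - 1" using s2 by (simp add: of_nat_diff)
      show ?thesis using K unfolding F_def tp spow rs D_def[symmetric] by (simp add: rs)
    qed
    show ?thesis
    proof (rule Min_eqI)
      show "finite ((\<lambda>\<epsilon>. bseq q r p (\<epsilon> * s ^ k + s ^ k - 1)) ` {1..s - 1})" by simp
      show "bseq q r p (s ^ (k + 1) - 1) \<in> (\<lambda>\<epsilon>. bseq q r p (\<epsilon> * s ^ k + s ^ k - 1)) ` {1..s - 1}"
        unfolding vv using s2 by (intro imageI) auto
      fix y assume "y \<in> (\<lambda>\<epsilon>. bseq q r p (\<epsilon> * s ^ k + s ^ k - 1)) ` {1..s - 1}"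
      then obtain e where e: "1 \<le> e" "e \<le> s - 1" and y: "y = bseq q r p (e * s ^ k + s ^ k - 1)" by auto
      have "y = F e" unfolding y using e s2 by (intro bF) auto
      then show "bseq q r p (s ^ (k + 1) - 1) \<le> y" unfolding bv using le[OF e] by simp
    qed
  qed
  have part2: "bseq q r p (e + 1) \<le> bseq q r p e" if e: "1 \<le> e" "e + 1 \<le> s - 1" for e
  proof -
    have ae: "aseq q r p m = q*m + r" if "1 \<le> m" "m < s" for m
      using aseq_form[OF q0 assms(2) assms(4), of m 0] that by (simp add: s_def hmap_def)
    have b: "bseq q r p m = (real q * real m + real r) / real m powr al" if "1 \<le> m" "m < s" for m
      unfolding bseq_def ae[OF that] s_def[symmetric] al_def[symmetric] by simp
    have "bseq q r p (e+1) = (real q * (real e + 1) + real r) / (real e + 1) powr al"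
    proof -
      have "e+1 < s" "1 \<le> e+1" using e by auto
      from b[OF this(2,1)] show ?thesis by (simp add: add.commute)
    qed
    also have "\<dots> \<le> (real q * real e + real r) / real e powr al"
      using mono2[OF al1, of "real e" "real q" "real r"] e by simp
    also have "\<dots> = bseq q r p e" using b[of e] e by simp
    finally show ?thesis .
  qed
  show ?thesis using part1 part2 unfolding s_def by blast
qed

end
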